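(* Assume the univalence axiom. Let $A\xrightarrow{i}E\xrightarrow{p}B$ be a short exact sequence of abelian groups, $G$ an abelian group, $G\to F\to E$ a short exact sequence, and suppose given path data $i^*(F)=\mathrm{pt}$, i.e. an isomorphism $\psi:G\oplus A\cong i^*(F)$ of middle groups respecting inclusions of $G$ and projections to $A$. Let $G\to F/A\to B$ be the short exact sequence whose middle group is the cokernel $F/A$ of $A\to G\oplus A\xrightarrow{\psi}i^*(F)\to F$, with maps $G\to F\to F/A$ and $F/A\to B$ induced by $F\to E\xrightarrow{p}B$. Then there is path data $p^*(F/A)=F$, i.e. an isomorphism between the middle group of $p^*(F/A)$ and $F$ respecting the inclusions of $G$ and the projections to $E$.
   Context: Short exact sequence $X\xrightarrow{j}M\xrightarrow{q}Y$: $j$ injective, $q$ surjective, $q\circ j=0$, and $X\to\ker q$ surjective. For $g:Y'\to Y$, the pullback $g^*(M)$ is the short exact sequence $X\to M\times_Y Y'\to Y'$ with middle group $\{(m,y')\mid q(m)=g(y')\}$, inclusion $x\mapsto (j(x),0)$ and projection $(m,y')\mapsto y'$. The trivial sequence $\mathrm{pt}$ from $G$ to $A$ is $G\to G\oplus A\to A$. *)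

theory Defs
  imports "HOL-Algebra.Algebra"
begin

text \<open>Abelian groups are HOL-Algebra commutative groups (written multiplicatively).
  A short exact sequence X --j--> M --q--> Y.\<close>

definition ses where
  "ses K M Y j q \<longleftrightarrow>
     j \<in> hom K M \<and> q \<in> hom M Y \<and> inj_on j (carrier K) \<and> q ` carrier M = carrier Y \<and>
     (\<forall>x\<in>carrier K. q (j x) = (one Y)) \<and> kernel M Y q \<subseteq> j ` carrier K"

definition pb_group where
  "pb_group M Y' q g = (M \<times>\<times> Y')\<lparr>carrier :=
      {(m, y'). m \<in> carrier M \<and> y' \<in> carrier Y' \<and> q m = g y'}\<rparr>"

definition pb_incl where
  "pb_incl Y' j = (\<lambda>x. (j x, (one Y')))"

definition pb_proj where
  "pb_proj = snd"

definition pt_group where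
  "pt_group G A = G \<times>\<times> A"

definition pt_incl where
  "pt_incl A = (\<lambda>x. (x, (one A)))"

definition pt_proj where
  "pt_proj = snd"

text \<open>Image of the composite A -> G (+) A --psi--> i^*(F) -> F.\<close>

definition A_image where
  "A_image G A \<psi> = (\<lambda>a. fst (\<psi> ((one G), a))) ` carrier A"

definition quot_group where
  "quot_group F G A \<psi> = F Mod (A_image G A \<psi>)"

definition quot_incl where
  "quot_incl F G A \<psi> k = (\<lambda>g. r_coset F (A_image G A \<psi>) (k g))"

definition quot_proj where
  "quot_proj p r = (\<lambda>C. p (r (SOME f. f \<in> C)))"

end

theory Submission
  imports Defs
begin

lemma pb_carrier: "carrier (pb_group M Y' q g) = {(m, y'). m \<in> carrier M \<and> y' \<in> carrier Y' \<and> q m = g y'}"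
  by (simp add: pb_group_def)

lemma pb_mult: "x \<otimes>\<^bsub>pb_group M Y' q g\<^esub> y = (fst x \<otimes>\<^bsub>M\<^esub> fst y, snd x \<otimes>\<^bsub>Y'\<^esub> snd y)"
  by (simp add: pb_group_def DirProd_def case_prod_beta)

lemma pt_carrier: "carrier (pt_group G A) = carrier G \<times> carrier A"
  by (simp add: pt_group_def DirProd_def)

lemma pt_mult: "x \<otimes>\<^bsub>pt_group G A\<^esub> y = (fst x \<otimes>\<^bsub>G\<^esub> fst y, snd x \<otimes>\<^bsub>A\<^esub> snd y)"
  by (simp add: pt_group_def DirProd_def case_prod_beta)

theorem lemma15:
  assumes "comm_group A" and "comm_group E" and "comm_group B"
    and "comm_group G" and "comm_group F"
    and ses_AEB: "ses A E B i p"
    and ses_GFE: "ses G F E k r"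
    and psi_iso: "\<psi> \<in> iso (pt_group G A) (pb_group F A r i)"
    and psi_incl: "\<forall>g\<in>carrier G. \<psi> (pt_incl A g) = pb_incl A k g"
    and psi_proj: "\<forall>x\<in>carrier (pt_group G A). pb_proj (\<psi> x) = pt_proj x"
  shows "\<exists>\<phi>. \<phi> \<in> iso (pb_group (quot_group F G A \<psi>) E (quot_proj p r) p) F
           \<and> (\<forall>g\<in>carrier G. \<phi> (pb_incl E (quot_incl F G A \<psi> k) g) = k g)
           \<and> (\<forall>x\<in>carrier (pb_group (quot_group F G A \<psi>) E (quot_proj p r) p).
                 r (\<phi> x) = pb_proj x)"
proof -
  interpret A: comm_group A by fact
  interpret E: comm_group E by fact
  interpret B: comm_group B by fact
  interpret G: comm_group G by fact
  interpret F: comm_group F by fact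
  have i_hom: "i \<in> hom A E" and p_hom: "p \<in> hom E B" and i_inj: "inj_on i (carrier A)"
    and p_surj: "p ` carrier E = carrier B" and pi1: "\<And>a. a \<in> carrier A \<Longrightarrow> p (i a) = \<one>\<^bsub>B\<^esub>"
    and ker_p: "kernel E B p \<subseteq> i ` carrier A"
    using ses_AEB by (auto simp: ses_def)
  have k_hom: "k \<in> hom G F" and r_hom: "r \<in> hom F E"
    and rk1: "\<And>g. g \<in> carrier G \<Longrightarrow> r (k g) = \<one>\<^bsub>E\<^esub>"
    using ses_GFE by (auto simp: ses_def)
  interpret ih: group_hom A E i using i_hom by (simp add: group_hom_def group_hom_axioms_def A.group_axioms E.group_axioms)
  interpret ph: group_hom E B p using p_hom by (simp add: group_hom_def group_hom_axioms_def B.group_axioms E.group_axioms)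
  interpret kh: group_hom G F k using k_hom by (simp add: group_hom_def group_hom_axioms_def G.group_axioms F.group_axioms)
  interpret rh: group_hom F E r using r_hom by (simp add: group_hom_def group_hom_axioms_def F.group_axioms E.group_axioms)
  have psi_hom: "\<psi> \<in> hom (pt_group G A) (pb_group F A r i)" using psi_iso by (simp add: iso_def)
  define s where "s = (\<lambda>a. fst (\<psi> (\<one>\<^bsub>G\<^esub>, a)))"
  define S where "S = A_image G A \<psi>"
  have S_def': "S = s ` carrier A" by (simp add: S_def s_def A_image_def)
  have psi_mem: "\<psi> (\<one>\<^bsub>G\<^esub>, a) \<in> carrier (pb_group F A r i)" if "a \<in> carrier A" for a
    using psi_hom that by (auto simp: hom_def pt_carrier)
  have psi_snd: "snd (\<psi> (\<one>\<^bsub>G\<^esub>, a)) = a" if "a \<in> carrier A" for a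
    using psi_proj that by (auto simp: pt_carrier pb_proj_def pt_proj_def)
  have s_car: "s a \<in> carrier F" if "a \<in> carrier A" for a
    using psi_mem[OF that] by (auto simp: s_def pb_carrier)
  have rs: "r (s a) = i a" if "a \<in> carrier A" for a
    using psi_mem[OF that] psi_snd[OF that] by (auto simp: s_def pb_carrier split: prod.splits)
  have s_mult: "s (a \<otimes>\<^bsub>A\<^esub> b) = s a \<otimes>\<^bsub>F\<^esub> s b" if "a \<in> carrier A" "b \<in> carrier A" for a b
  proof -
    have "(\<one>\<^bsub>G\<^esub>, a \<otimes>\<^bsub>A\<^esub> b) = (\<one>\<^bsub>G\<^esub>, a) \<otimes>\<^bsub>pt_group G A\<^esub> (\<one>\<^bsub>G\<^esub>, b)"
      by (simp add: pt_mult)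
    then have "\<psi> (\<one>\<^bsub>G\<^esub>, a \<otimes>\<^bsub>A\<^esub> b) = \<psi> (\<one>\<^bsub>G\<^esub>, a) \<otimes>\<^bsub>pb_group F A r i\<^esub> \<psi> (\<one>\<^bsub>G\<^esub>, b)"
      using psi_hom that by (simp add: hom_mult pt_carrier)
    then show ?thesis by (simp add: s_def pb_mult)
  qed
  have s_hom: "s \<in> hom A F" using s_car s_mult by (auto simp: hom_def)
  interpret sh: group_hom A F s using s_hom by (simp add: group_hom_def group_hom_axioms_def A.group_axioms F.group_axioms)
  have S_sub: "subgroup S F" unfolding S_def' by (rule sh.img_is_subgroup)
  interpret Sn: normal S F using F.subgroup_imp_normal[OF S_sub] .
  have S_car: "S \<subseteq> carrier F" using S_sub by (rule subgroup.subset)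
  have qp: "quot_proj p r (S #>\<^bsub>F\<^esub> f) = p (r f)" if f: "f \<in> carrier F" for f
  proof -
    have "f \<in> S #>\<^bsub>F\<^esub> f" using f S_sub by (simp add: F.rcos_self)
    then have ex: "(SOME x. x \<in> S #>\<^bsub>F\<^esub> f) \<in> S #>\<^bsub>F\<^esub> f" by (rule someI)
    then obtain a where a: "a \<in> carrier A" and x: "(SOME x. x \<in> S #>\<^bsub>F\<^esub> f) = s a \<otimes>\<^bsub>F\<^esub> f"
      by (auto simp: r_coset_def S_def')
    have "p (r (s a \<otimes>\<^bsub>F\<^esub> f)) = p (i a) \<otimes>\<^bsub>B\<^esub> p (r f)"
      using a f s_car rs by (simp add: rh.hom_mult ph.hom_mult)
    also have "\<dots> = p (r f)" using pi1[OF a] f by simp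
    finally show ?thesis by (simp add: quot_proj_def x)
  qed
  define P where "P = pb_group (quot_group F G A \<psi>) E (quot_proj p r) p"
  define \<theta> where "\<theta> = (\<lambda>f. (S #>\<^bsub>F\<^esub> f, r f))"
  have PQ: "carrier (quot_group F G A \<psi>) = rcosets\<^bsub>F\<^esub> S"
    by (simp add: quot_group_def FactGroup_def S_def)
  have Pcar: "carrier P = {(C, e). C \<in> rcosets\<^bsub>F\<^esub> S \<and> e \<in> carrier E \<and> quot_proj p r C = p e}"
    by (simp add: P_def pb_carrier PQ)
  have th_hom: "\<theta> \<in> hom F P"
  proof (rule homI)
    fix f assume f: "f \<in> carrier F"
    show "\<theta> f \<in> carrier P" using f by (auto simp: Pcar \<theta>_def qp intro: F.rcosetsI[OF S_car])
  next
    fix f g assume f: "f \<in> carrier F" and g: "g \<in> carrier F"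
    show "\<theta> (f \<otimes>\<^bsub>F\<^esub> g) = \<theta> f \<otimes>\<^bsub>P\<^esub> \<theta> g"
      using f g by (simp add: \<theta>_def P_def pb_mult quot_group_def FactGroup_def S_def[symmetric] Sn.rcos_sum)
  qed
  have th_inj: "inj_on \<theta> (carrier F)"
  proof (rule inj_onI)
    fix f g assume f: "f \<in> carrier F" and g: "g \<in> carrier F" and eq: "\<theta> f = \<theta> g"
    then have c: "S #>\<^bsub>F\<^esub> f = S #>\<^bsub>F\<^esub> g" and rr: "r f = r g" by (auto simp: \<theta>_def)
    have "f \<in> S #>\<^bsub>F\<^esub> g" using c f S_sub by (metis F.rcos_self)
    then obtain a where a: "a \<in> carrier A" and fa: "f = s a \<otimes>\<^bsub>F\<^esub> g"
      by (auto simp: r_coset_def S_def')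
    have "i a \<otimes>\<^bsub>E\<^esub> r g = r g" using rr fa a g s_car rs by (simp add: rh.hom_mult)
    then have "i a = \<one>\<^bsub>E\<^esub>" using a g by (metis E.l_cancel_one' E.r_one ih.hom_closed rh.hom_closed E.m_comm)
    then have "a = \<one>\<^bsub>A\<^esub>" using i_inj a by (metis A.one_closed ih.hom_one inj_on_def)
    then show "f = g" using fa g by simp
  qed
  have th_surj: "\<theta> ` carrier F = carrier P"
  proof (rule equalityI)
    show "\<theta> ` carrier F \<subseteq> carrier P" using th_hom by (auto simp: hom_def)
  next
    show "carrier P \<subseteq> \<theta> ` carrier F"
    proof (rule subsetI)
      fix x assume x: "x \<in> carrier P"
      then obtain C e where xe: "x = (C, e)" and C: "C \<in> rcosets\<^bsub>F\<^esub> S" and e: "e \<in> carrier E"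
        and qe: "quot_proj p r C = p e" by (auto simp: Pcar)
      obtain f where f: "f \<in> carrier F" and Cf: "C = S #>\<^bsub>F\<^esub> f" using C by (auto simp: RCOSETS_def)
      have pe: "p (r f) = p e" using qe qp[OF f] Cf by simp
      have "inv\<^bsub>E\<^esub> (r f) \<otimes>\<^bsub>E\<^esub> e \<in> kernel E B p"
        using pe f e by (simp add: kernel_def ph.hom_mult ph.hom_inv B.l_inv)
      then have "inv\<^bsub>E\<^esub> (r f) \<otimes>\<^bsub>E\<^esub> e \<in> i ` carrier A" using ker_p by (rule subsetD[rotated])
      then obtain a where a: "a \<in> carrier A" and ia: "inv\<^bsub>E\<^esub> (r f) \<otimes>\<^bsub>E\<^esub> e = i a" by (rule imageE)
      have "r (f \<otimes>\<^bsub>F\<^esub> s a) = r f \<otimes>\<^bsub>E\<^esub> i a"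
        using f a s_car rs by (simp add: rh.hom_mult)
      also have "\<dots> = r f \<otimes>\<^bsub>E\<^esub> (inv\<^bsub>E\<^esub> (r f) \<otimes>\<^bsub>E\<^esub> e)" by (simp only: ia[symmetric])
      also have "\<dots> = e" using f e by (simp add: E.m_assoc[symmetric] E.r_inv)
      finally have re: "r (f \<otimes>\<^bsub>F\<^esub> s a) = e" .
      have "S #>\<^bsub>F\<^esub> (f \<otimes>\<^bsub>F\<^esub> s a) = S #>\<^bsub>F\<^esub> f"
      proof -
        have "S #>\<^bsub>F\<^esub> (f \<otimes>\<^bsub>F\<^esub> s a) = S #>\<^bsub>F\<^esub> (s a \<otimes>\<^bsub>F\<^esub> f)" using f a s_car by (simp add: F.m_comm)
        also have "\<dots> = (S #>\<^bsub>F\<^esub> s a) #>\<^bsub>F\<^esub> f" using f a s_car S_car by (simp add: F.coset_mult_assoc)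
        also have "S #>\<^bsub>F\<^esub> s a = S" using a by (intro subgroup.rcos_const[OF S_sub F.is_group]) (auto simp: S_def')
        finally show ?thesis .
      qed
      with re have "\<theta> (f \<otimes>\<^bsub>F\<^esub> s a) = x" by (simp add: \<theta>_def xe Cf)
      then show "x \<in> \<theta> ` carrier F" using f a s_car by (metis F.m_closed image_eqI)
    qed
  qed
  have th_iso: "\<theta> \<in> iso F P" using th_hom th_inj th_surj by (simp add: iso_iff)
  define \<phi> where "\<phi> = inv_into (carrier F) \<theta>"
  have phi_iso: "\<phi> \<in> iso P F" unfolding \<phi>_def by (rule F.iso_set_sym[OF th_iso])
  have phi_th: "\<phi> (\<theta> f) = f" if "f \<in> carrier F" for f
    using th_inj that by (simp add: \<phi>_def)
  have th_phi: "\<theta> (\<phi> x) = x" if "x \<in> carrier P" for x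
    using th_surj that by (simp add: \<phi>_def f_inv_into_f)
  show ?thesis
  proof (intro exI conjI ballI)
    show "\<phi> \<in> iso (pb_group (quot_group F G A \<psi>) E (quot_proj p r) p) F" using phi_iso by (simp add: P_def)
  next
    fix g assume g: "g \<in> carrier G"
    have "pb_incl E (quot_incl F G A \<psi> k) g = \<theta> (k g)"
      using g rk1 by (simp add: pb_incl_def quot_incl_def \<theta>_def S_def)
    then show "\<phi> (pb_incl E (quot_incl F G A \<psi> k) g) = k g" using g phi_th by simp
  next
    fix x assume "x \<in> carrier (pb_group (quot_group F G A \<psi>) E (quot_proj p r) p)"
    then have x: "x \<in> carrier P" by (simp add: P_def)
    have "r (\<phi> x) = snd (\<theta> (\<phi> x))" by (simp add: \<theta>_def)
    then show "r (\<phi> x) = pb_proj x" using th_phi[OF x] by (simp add: pb_proj_def)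
  qed
qed

end
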